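(* For each $n\in\mathbb N$ we have $\log p^{(j)}_n\sim j\log j$ as $j\to+\infty$.
   Context: Let $p_n$ denote the $n$-th prime number. Define $p^{(0)}_n=n$ and recursively $p^{(k+1)}_n=p_{p^{(k)}_n}$ for $k\in\mathbb N_0$. $\log$ is the natural logarithm and $a_j\sim b_j$ means $a_j/b_j\to1$. *)

theory Defs
  imports "HOL-Computational_Algebra.Primes" "HOL-Library.Landau_Symbols"
begin

text \<open>The n-th prime p_n, 1-indexed: p_1 = 2, p_2 = 3, ... It is the least prime p
  such that exactly n primes are at most p. (The value for n = 0 is irrelevant.)\<close>
definition nth_prime :: "nat \<Rightarrow> nat" where
  "nth_prime n = (LEAST p. prime p \<and> card {q. prime q \<and> q \<le> p} = n)"

primrec iter_prime :: "nat \<Rightarrow> nat \<Rightarrow> nat" where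
  "iter_prime 0 n = n"
| "iter_prime (Suc k) n = nth_prime (iter_prime k n)"

end

theory Submission
  imports Defs "HOL-Real_Asymp.Real_Asymp"
begin


definition ppi :: "nat \<Rightarrow> nat" where "ppi x = card {q. prime q \<and> q \<le> x}"

lemma ppi_fin: "finite {q::nat. prime q \<and> q \<le> x}" by auto

lemma ppi_0: "ppi 0 = 0" unfolding ppi_def by (auto simp: prime_ge_2_nat)

lemma ppi_Suc: "ppi (Suc x) = ppi x + (if prime (Suc x) then 1 else 0)"
proof -
  have "{q. prime q \<and> q \<le> Suc x} = (if prime (Suc x) then insert (Suc x) {q. prime q \<and> q \<le> x} else {q. prime q \<and> q \<le> x})"
    by (auto simp: le_Suc_eq)
  then show ?thesis unfolding ppi_def by auto
qed

lemma ppi_mono: "x \<le> y \<Longrightarrow> ppi x \<le> ppi y"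
  unfolding ppi_def by (intro card_mono) auto

lemma ppi_le: "ppi x \<le> x - 1"
proof -
  have "{q. prime q \<and> q \<le> x} \<subseteq> {2..x}" by (auto simp: prime_ge_2_nat)
  then have "ppi x \<le> card {2..x}" unfolding ppi_def by (intro card_mono) auto
  then show ?thesis by simp
qed

lemma ppi_unbounded: "\<exists>x. ppi x \<ge> m"
proof (induction m)
  case 0 then show ?case by auto
next
  case (Suc m)
  then obtain x where x: "ppi x \<ge> m" by auto
  obtain p where p: "prime p" "p > x" using bigger_prime by auto
  then obtain q where q: "p = Suc q" by (cases p) auto
  have "ppi p = ppi q + 1" using ppi_Suc[of q] p q by auto
  moreover have "ppi q \<ge> ppi x" using p q by (intro ppi_mono) auto
  ultimately show ?case using x by (intro exI[of _ p]) auto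
qed

lemma nth_prime_props:
  assumes "m \<ge> 1"
  shows "prime (nth_prime m) \<and> ppi (nth_prime m) = m"
proof -
  define x where "x = (LEAST x. ppi x \<ge> m)"
  have x1: "ppi x \<ge> m" unfolding x_def using ppi_unbounded by (metis LeastI_ex)
  have x0: "x \<noteq> 0" using x1 assms ppi_0 by (metis not_one_le_zero order.trans)
  then obtain y where y: "x = Suc y" by (cases x) auto
  have "\<not> ppi y \<ge> m"
  proof
    assume "ppi y \<ge> m"
    then have "x \<le> y" unfolding x_def by (rule Least_le)
    then show False using y by simp
  qed
  then have "prime x \<and> ppi x = m" using ppi_Suc[of y] x1 y by (auto split: if_splits)
  then have ex: "\<exists>p::nat. prime p \<and> card {q. prime q \<and> q \<le> p} = m" unfolding ppi_def by blast
  show ?thesis unfolding nth_prime_def ppi_def using LeastI_ex[OF ex] by simp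
qed

lemma nth_prime_gt: "m \<ge> 1 \<Longrightarrow> nth_prime m > m"
  using nth_prime_props[of m] ppi_le[of "nth_prime m"] prime_ge_2_nat[of "nth_prime m"] by auto



lemma prod_primes_dvd:
  fixes N :: nat
  assumes "finite S" "\<And>p. p \<in> S \<Longrightarrow> prime p \<and> p dvd N"
  shows "\<Prod>S dvd N"
  using assms
proof (induction S rule: finite_induct)
  case empty then show ?case by simp
next
  case (insert p F)
  have cop: "coprime p (\<Prod>F)"
    using insert by (intro prod_coprime_right) (auto intro: primes_coprime)
  have "p * \<Prod>F dvd N"
    using insert cop by (intro divides_mult) auto
  then show ?case using insert by simp
qed

lemma choose_mid_le: "(2*m+1) choose (m+1) \<le> 4^m"
proof -
  have sym: "(2*m+1) choose (m+1) = (2*m+1) choose m"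
    using binomial_symmetric[of m "2*m+1"] by simp
  have "(\<Sum>k\<in>{m, m+1}. (2*m+1) choose k) \<le> (\<Sum>k\<le>2*m+1. (2*m+1) choose k)"
    by (intro sum_mono2) auto
  also have "\<dots> = 2^(2*m+1)" by (rule choose_row_sum)
  finally have "2 * ((2*m+1) choose (m+1)) \<le> 2 * 4^m"
    using sym by (simp add: power_mult power_add)
  then show ?thesis by simp
qed

lemma prime_dvd_choose_mid:
  assumes "prime p" "m+2 \<le> p" "p \<le> 2*m+1"
  shows "p dvd ((2*m+1) choose (m+1))"
proof -
  have e: "fact (m+1) * fact m * ((2*m+1) choose (m+1)) = (fact (2*m+1) :: nat)"
    using binomial_fact_lemma[of "m+1" "2*m+1"] by simp
  have "p dvd (fact (2*m+1) :: nat)" using assms prime_dvd_fact_iff by blast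
  moreover have "\<not> p dvd (fact (m+1) :: nat)"
    using prime_dvd_fact_iff[OF assms(1), of "m+1"] assms(2) by linarith
  moreover have "\<not> p dvd (fact m :: nat)"
    using prime_dvd_fact_iff[OF assms(1), of "m"] assms(2) by linarith
  ultimately show ?thesis using e assms(1) by (metis prime_dvd_mult_iff)
qed

definition prim :: "nat \<Rightarrow> nat" where "prim x = \<Prod>{p. prime p \<and> p \<le> x}"

lemma prim_le: "prim x \<le> 4^x"
proof (induction x rule: less_induct)
  case (less x)
  show ?case
  proof (cases "x \<le> 2")
    case True
    have sub: "{p. prime p \<and> p \<le> x} \<subseteq> {2}"
    proof
      fix p assume "p \<in> {p. prime p \<and> p \<le> x}"
      then have pp: "prime p" "p \<le> x" by auto
      then have "p \<ge> 2" by (simp add: prime_ge_2_nat)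
      then show "p \<in> {2}" using True pp(2) by simp
    qed
    then consider "{p. prime p \<and> p \<le> x} = {}" | "{p. prime p \<and> p \<le> x} = {2}"
      by (metis subset_singletonD)
    then show ?thesis
    proof cases
      case 1 show ?thesis unfolding prim_def 1 by simp
    next
      case 2
      then have "2 \<le> x" by blast
      then have "(4::nat)^1 \<le> 4^x" by (intro power_increasing) auto
      then have "(4::nat) \<le> 4^x" by simp
      then show ?thesis unfolding prim_def 2 by simp
    qed
  next
    case False
    show ?thesis
    proof (cases "even x")
      case True
      then have np: "\<not> prime x" using False True prime_odd_nat[of x] by auto
      have "{p. prime p \<and> p \<le> x} = {p. prime p \<and> p \<le> x - 1}"
      proof (rule Collect_cong)
        fix p
        show "(prime p \<and> p \<le> x) = (prime p \<and> p \<le> x - 1)"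
          using np by (cases "p = x") auto
      qed
      then have "prim x = prim (x-1)" unfolding prim_def by simp
      also have "\<dots> \<le> 4^(x-1)" using less False by simp
      also have "\<dots> \<le> 4^x" by (intro power_increasing) auto
      finally show ?thesis .
    next
      case odd: False
      then obtain m where m: "x = 2*m+1" by (metis oddE)
      have m1: "m \<ge> 1" using m False by simp
      have split: "{p. prime p \<and> p \<le> x} = {p. prime p \<and> p \<le> m+1} \<union> {p. prime p \<and> m+2 \<le> p \<and> p \<le> 2*m+1}"
        using m by auto
      have disj: "{p. prime p \<and> p \<le> m+1} \<inter> {p. prime p \<and> m+2 \<le> p \<and> p \<le> 2*m+1} = {}" by auto
      have fin2: "finite {p. prime p \<and> m+2 \<le> p \<and> p \<le> 2*m+1}" by auto
      have "prim x = prim (m+1) * \<Prod>{p. prime p \<and> m+2 \<le> p \<and> p \<le> 2*m+1}"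
        unfolding prim_def split by (subst prod.union_disjoint) (use disj fin2 in auto)
      also have "\<dots> \<le> 4^(m+1) * 4^m"
      proof (intro mult_le_mono)
        have "m+1 < x" using m m1 by simp
        then show "prim (m+1) \<le> 4^(m+1)" by (rule less)
        have "\<Prod>{p. prime p \<and> m+2 \<le> p \<and> p \<le> 2*m+1} dvd ((2*m+1) choose (m+1))"
          using fin2
        proof (rule prod_primes_dvd)
          fix p assume "p \<in> {p. prime p \<and> m+2 \<le> p \<and> p \<le> 2*m+1}"
          then have pp: "prime p" "m+2 \<le> p" "p \<le> 2*m+1" by auto
          show "prime p \<and> p dvd ((2*m+1) choose (m+1))"
            using pp prime_dvd_choose_mid[OF pp] by blast
        qed
        then have "\<Prod>{p. prime p \<and> m+2 \<le> p \<and> p \<le> 2*m+1} \<le> ((2*m+1) choose (m+1))"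
          by (intro dvd_imp_le) auto
        then show "\<Prod>{p. prime p \<and> m+2 \<le> p \<and> p \<le> 2*m+1} \<le> 4^m"
          using choose_mid_le by (rule order.trans)
      qed
      also have "\<dots> = 4^x" using m by (simp add: power_add[symmetric])
      finally show ?thesis .
    qed
  qed
qed

lemma theta_le: "(\<Sum>p\<in>{p. prime p \<and> p \<le> x}. ln (real p)) \<le> real x * ln 4"
proof -
  have pos: "\<And>p. p \<in> {p. prime p \<and> p \<le> x} \<Longrightarrow> real p > 0" using prime_gt_0_nat by auto
  have "(\<Sum>p\<in>{p. prime p \<and> p \<le> x}. ln (real p)) = ln (\<Prod>p\<in>{p. prime p \<and> p \<le> x}. real p)"
    using pos by (subst ln_prod) auto
  also have "(\<Prod>p\<in>{p. prime p \<and> p \<le> x}. real p) = real (prim x)" unfolding prim_def by simp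
  also have "ln (real (prim x)) \<le> ln (4 ^ x)"
  proof -
    have pp: "prim x > 0" unfolding prim_def by (intro prod_pos) (auto simp: prime_gt_0_nat)
    have le: "real (prim x) \<le> real (4^x)" using prim_le[of x] by (simp only: of_nat_le_iff)
    have "ln (real (prim x)) \<le> ln (real (4^x))"
      using pp le by (subst ln_le_cancel_iff) auto
    then show ?thesis by simp
  qed
  also have "\<dots> = real x * ln 4" by (simp add: ln_realpow)
  finally show ?thesis .
qed



lemma ppi_upper:
  assumes "x \<ge> 2"
  shows "real (ppi x) * ln (real x) \<le> 6 * real x"
proof -
  define s where "s = sqrt (real x)"
  have s1: "s \<ge> 1" unfolding s_def using assms by auto
  have lns: "ln s = ln (real x) / 2" unfolding s_def using assms by (simp add: ln_sqrt)
  have lnxpos: "ln (real x) > 0" using assms by simp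
  have lnspos: "ln s > 0" using lnxpos lns by simp
  define P where "P = {p. prime p \<and> p \<le> x}"
  define A where "A = {p \<in> P. real p \<le> s}"
  define B where "B = {p \<in> P. real p > s}"
  have finP: "finite P" unfolding P_def by auto
  have PAB: "P = A \<union> B" "A \<inter> B = {}" unfolding A_def B_def by auto
  have cardP: "card P = card A + card B" using finP PAB by (simp add: card_Un_disjoint)
  have "A \<subseteq> {1..nat \<lfloor>s\<rfloor>}" unfolding A_def P_def using prime_ge_1_nat
    by (auto simp: le_nat_floor)
  then have "card A \<le> nat \<lfloor>s\<rfloor>" by (metis card_atLeastAtMost card_mono diff_Suc_1 finite_atLeastAtMost)
  then have cA: "real (card A) \<le> s" using s1 by linarith
  have "real (card B) * ln s = (\<Sum>p\<in>B. ln s)" by simp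
  also have "\<dots> \<le> (\<Sum>p\<in>B. ln (real p))"
    by (intro sum_mono) (use s1 in \<open>auto simp: B_def\<close>)
  also have "\<dots> \<le> (\<Sum>p\<in>P. ln (real p))"
    using finP unfolding B_def by (intro sum_mono2) (auto simp: P_def, metis ln_ge_zero of_nat_1 of_nat_le_iff prime_ge_1_nat)
  also have "\<dots> \<le> real x * ln 4" unfolding P_def by (rule theta_le)
  finally have cB: "real (card B) * ln (real x) \<le> 2 * real x * ln 4" using lns by simp
  have "s * ln (real x) = 2 * s * ln s" using lns by simp
  also have "\<dots> \<le> 2 * s * (s - 1)" using s1 by (intro mult_left_mono ln_le_minus_one) auto
  also have "\<dots> \<le> 2 * real x"
  proof -
    have ss: "s * s = real x" unfolding s_def by simp
    show ?thesis using s1 ss by (simp add: algebra_simps)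
  qed
  finally have sx: "s * ln (real x) \<le> 2 * real x" .
  have ln4: "ln (4::real) \<le> 2"
  proof -
    have "ln (4::real) = 2 * ln 2" using ln_realpow[of 2 2] by simp
    then show ?thesis using ln_2_less_1 by linarith
  qed
  have lnx: "ln (real x) \<ge> 0" using assms by simp
  have "real (ppi x) * ln (real x) = real (card A) * ln (real x) + real (card B) * ln (real x)"
    unfolding ppi_def P_def[symmetric] cardP by (simp add: algebra_simps)
  also have "\<dots> \<le> s * ln (real x) + 2 * real x * ln 4"
    using cA cB lnx by (intro add_mono mult_right_mono) auto
  also have "\<dots> \<le> 2 * real x + 2 * real x * (2)"
    using sx ln4 by (intro add_mono mult_left_mono) auto
  finally show ?thesis by simp
qed



lemma Suc_div_nat: "(q::nat) > 0 \<Longrightarrow> Suc m div q = m div q + (if q dvd Suc m then 1 else 0)"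
  by (auto simp: div_Suc mod_eq_0_iff_dvd)

lemma mult_le_self:
  assumes "prime (p::nat)" "x > 0"
  shows "multiplicity p x \<le> x"
proof -
  have "p ^ multiplicity p x \<le> x" using assms by (intro dvd_imp_le multiplicity_dvd) auto
  moreover have "multiplicity p x < 2 ^ multiplicity p x" by (rule less_exp)
  moreover have "(2::nat) ^ multiplicity p x \<le> p ^ multiplicity p x"
    using assms prime_ge_2_nat by (intro power_mono) auto
  ultimately show ?thesis by linarith
qed

lemma legendre0:
  assumes "prime (p::nat)"
  shows "multiplicity p (fact m :: nat) = (\<Sum>i\<in>{1..m}. m div p^i)"
proof (induction m)
  case 0 then show ?case by simp
next
  case (Suc m)
  have p2: "p \<ge> 2" using assms prime_ge_2_nat by auto
  have a: "multiplicity p (fact (Suc m) :: nat) = multiplicity p (Suc m) + multiplicity p (fact m :: nat)"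
    using assms prime_elem_multiplicity_mult_distrib[of p "Suc m" "fact m :: nat"]
    by (simp only: fact_Suc of_nat_id) simp
  have b: "multiplicity p (Suc m) = card ({1..Suc m} \<inter> {i. p^i dvd Suc m})"
  proof -
    have iff: "p^i dvd Suc m \<longleftrightarrow> i \<le> multiplicity p (Suc m)" for i
      by (rule power_dvd_iff_le_multiplicity) (use assms in auto)
    have "({1..Suc m} \<inter> {i. p^i dvd Suc m}) = {1..multiplicity p (Suc m)}"
      using mult_le_self[OF assms, of "Suc m"] unfolding iff by auto
    then show ?thesis by simp
  qed
  have c: "(\<Sum>i\<in>{1..Suc m}. Suc m div p^i) = (\<Sum>i\<in>{1..Suc m}. m div p^i) + (\<Sum>i\<in>{1..Suc m}. if p^i dvd Suc m then 1 else 0)"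
    using p2 by (simp add: Suc_div_nat sum.distrib)
  have d: "(\<Sum>i\<in>{1..Suc m}. if p^i dvd Suc m then 1 else 0) = card ({1..Suc m} \<inter> {i. p^i dvd Suc m})"
    by (simp only: card_eq_sum sum.inter_restrict[OF finite_atLeastAtMost] mem_Collect_eq)
  have e: "(\<Sum>i\<in>{1..Suc m}. m div p^i) = (\<Sum>i\<in>{1..m}. m div p^i)"
  proof -
    have "m < 2 ^ Suc m" using less_exp[of "Suc m"] by linarith
    also have "(2::nat) ^ Suc m \<le> p ^ Suc m" using p2 by (intro power_mono) auto
    finally have "m div p ^ Suc m = 0" by simp
    then show ?thesis by simp
  qed
  show ?case using a b c d e Suc by simp
qed

lemma legendre:
  assumes "prime (p::nat)" "m \<le> N"
  shows "multiplicity p (fact m :: nat) = (\<Sum>i\<in>{1..N}. m div p^i)"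
proof -
  have p2: "p \<ge> 2" using assms prime_ge_2_nat by auto
  have "(\<Sum>i\<in>{1..N}. m div p^i) = (\<Sum>i\<in>{1..m}. m div p^i)"
  proof (rule sum.mono_neutral_right)
    show "\<forall>i\<in>{1..N} - {1..m}. m div p ^ i = 0"
    proof
      fix i assume i: "i \<in> {1..N} - {1..m}"
      have mi: "m \<le> i" using i by auto
      have "m < 2 ^ m" by (rule less_exp)
      also have "(2::nat) ^ m \<le> 2 ^ i" using mi by (intro power_increasing) auto
      finally have "m < 2 ^ i" .
      also have "(2::nat) ^ i \<le> p ^ i" using p2 by (intro power_mono) auto
      finally show "m div p ^ i = 0" by simp
    qed
  qed (use assms in auto)
  then show ?thesis using legendre0[OF assms(1)] by simp
qed

lemma div_double_le: "(q::nat) > 0 \<Longrightarrow> (2*n) div q \<le> 2 * (n div q) + 1"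
proof -
  assume q: "q > 0"
  have h: "n div q * q + n mod q = n" by (rule div_mult_mod_eq)
  have "2*n = 2*(n div q * q + n mod q)" using h by simp
  also have "\<dots> = 2 * (n div q) * q + 2 * (n mod q)" by (simp only: distrib_left mult.assoc)
  finally have "2*n = 2 * (n div q) * q + 2 * (n mod q)" .
  moreover have "2 * (n mod q) < 2 * q" using q by simp
  ultimately have "2*n < (2 * (n div q) + 2) * q" by (simp add: algebra_simps)
  then have "(2*n) div q < 2 * (n div q) + 2" using q by (simp add: div_less_iff_less_mult)
  then show ?thesis by simp
qed

lemma mult_choose_le:
  assumes "prime (p::nat)" "n \<ge> 1"
  shows "p ^ multiplicity p ((2*n) choose n) \<le> 2*n"
proof (rule ccontr)
  assume contra: "\<not> ?thesis"
  define e where "e = multiplicity p ((2*n) choose n)"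
  have p2: "p \<ge> 2" using assms prime_ge_2_nat by auto
  have C0: "(2*n) choose n \<noteq> 0" by simp
  have fe: "fact n * fact n * ((2*n) choose n) = (fact (2*n) :: nat)"
    using binomial_fact_lemma[of n "2*n"] by (simp add: mult_2)
  have f0: "(fact n :: nat) \<noteq> 0" by simp
  have m1: "multiplicity p (fact n * fact n * ((2*n) choose n)) = multiplicity p (fact n * fact n :: nat) + e"
    unfolding e_def by (rule prime_elem_multiplicity_mult_distrib) (use assms C0 f0 in auto)
  have m2: "multiplicity p (fact n * fact n :: nat) = multiplicity p (fact n :: nat) + multiplicity p (fact n :: nat)"
    by (rule prime_elem_multiplicity_mult_distrib) (use assms f0 in auto)
  have "multiplicity p (fact (2*n) :: nat) = 2 * multiplicity p (fact n :: nat) + e"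
    unfolding fe[symmetric] m1 m2 by simp
  then have eq: "(\<Sum>i\<in>{1..2*n}. (2*n) div p^i) = 2 * (\<Sum>i\<in>{1..2*n}. n div p^i) + e"
    using legendre[OF assms(1), of "2*n" "2*n"] legendre[OF assms(1), of n "2*n"] by simp
  have "(\<Sum>i\<in>{1..2*n}. (2*n) div p^i) \<le> (\<Sum>i\<in>{1..2*n}. 2 * (n div p^i) + (if p^i \<le> 2*n then 1 else 0))"
  proof (rule sum_mono)
    fix i
    have pi0: "p^i > 0" using p2 by simp
    show "(2*n) div p^i \<le> 2 * (n div p^i) + (if p^i \<le> 2*n then 1 else 0)"
    proof (cases "p^i \<le> 2*n")
      case True then show ?thesis using div_double_le[OF pi0, of n] by simp
    next
      case False then have "(2*n) div p^i = 0" by (intro div_less) simp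
      then show ?thesis by simp
    qed
  qed
  also have "\<dots> = 2 * (\<Sum>i\<in>{1..2*n}. n div p^i) + card ({1..2*n} \<inter> {i. p^i \<le> 2*n})"
    by (simp only: sum.distrib sum_distrib_left[symmetric] card_eq_sum sum.inter_restrict[OF finite_atLeastAtMost] mem_Collect_eq)
  finally have ecard: "e \<le> card ({1..2*n} \<inter> {i. p^i \<le> 2*n})" using eq by simp
  have pe: "p^e > 2*n" using contra e_def by simp
  have "({1..2*n} \<inter> {i. p^i \<le> 2*n}) \<subseteq> {1..<e}"
  proof
    fix i assume i: "i \<in> ({1..2*n} \<inter> {i. p^i \<le> 2*n})"
    then have "p^i < p^e" using pe by auto
    then have "i < e" using p2 by (simp add: power_strict_increasing_iff)
    then show "i \<in> {1..<e}" using i by auto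
  qed
  then have "card ({1..2*n} \<inter> {i. p^i \<le> 2*n}) \<le> card {1..<e}" by (intro card_mono) auto
  then have "card ({1..2*n} \<inter> {i. p^i \<le> 2*n}) \<le> e - 1" by simp
  moreover have "e \<ge> 1" using pe assms(2) by (cases e) auto
  ultimately show False using ecard by linarith
qed

lemma choose_le_pow_ppi:
  assumes "n \<ge> 1"
  shows "(2*n) choose n \<le> (2*n) ^ ppi (2*n)"
proof -
  define C where "C = (2*n) choose n"
  have C0: "C \<noteq> 0" unfolding C_def by simp
  have sub: "prime_factors C \<subseteq> {p. prime p \<and> p \<le> 2*n}"
  proof
    fix p assume p: "p \<in> prime_factors C"
    then have pp: "prime p" "p dvd C" by (rule in_prime_factors_imp_prime, rule in_prime_factors_imp_dvd)
    have fe: "fact n * fact n * C = (fact (2*n) :: nat)" unfolding C_def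
      using binomial_fact_lemma[of n "2*n"] by (simp add: mult_2)
    have "C dvd fact (2*n)" unfolding fe[symmetric] by simp
    then have "p dvd fact (2*n)" using pp dvd_trans by blast
    then have "p \<le> 2*n" using prime_dvd_fact_iff[OF pp(1), of "2*n"] by blast
    then show "p \<in> {p. prime p \<and> p \<le> 2*n}" using pp(1) by blast
  qed
  have "C = (\<Prod>p \<in> prime_factors C. p ^ multiplicity p C)" using prod_prime_factors[OF C0] by simp
  also have "\<dots> \<le> (\<Prod>p \<in> prime_factors C. 2*n)"
  proof (rule prod_mono)
    fix p assume "p \<in> prime_factors C"
    then have "prime p" by (rule in_prime_factors_imp_prime)
    then have "p ^ multiplicity p C \<le> 2*n" unfolding C_def by (rule mult_choose_le) (rule assms)
    then show "0 \<le> p ^ multiplicity p C \<and> p ^ multiplicity p C \<le> 2*n" by simp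
  qed
  also have "\<dots> = (2*n) ^ card (prime_factors C)" by simp
  also have "\<dots> \<le> (2*n) ^ ppi (2*n)" unfolding ppi_def
    using assms sub by (intro power_increasing card_mono) auto
  finally show ?thesis unfolding C_def .
qed



lemma four_pow_le: "4^n \<le> (2*n+1) * ((2*n) choose n)"
proof -
  have "(4::nat)^n = 2^(2*n)" by (simp add: power_mult)
  also have "\<dots> = (\<Sum>k\<le>2*n. (2*n) choose k)" by (simp add: choose_row_sum)
  also have "\<dots> \<le> (\<Sum>k\<le>2*n. (2*n) choose n)" by (intro sum_mono binomial_maximum')
  also have "\<dots> = (2*n+1) * ((2*n) choose n)" by simp
  finally show ?thesis .
qed

lemma ppi_lower:
  assumes "x \<ge> 2"
  shows "real (ppi x) * ln (real x) \<ge> (real x - 1) * ln 2 - ln (real x + 1)"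
proof -
  define n where "n = x div 2"
  have n1: "n \<ge> 1" "2*n \<le> x" "real x \<le> 2 * real n + 1" using assms unfolding n_def by linarith+
  have "4^n \<le> (2*n+1) * (2*n) ^ ppi (2*n)"
    using four_pow_le[of n] choose_le_pow_ppi[OF n1(1)] by (meson le_trans mult_le_mono2)
  then have "real (4^n) \<le> real ((2*n+1) * (2*n) ^ ppi (2*n))" by linarith
  then have le: "(4::real)^n \<le> (2*real n+1) * (2*real n)^ppi(2*n)"
    by (simp only: of_nat_mult of_nat_add of_nat_power of_nat_numeral of_nat_1)
  have pos: "(2*real n+1) * (2*real n)^ppi(2*n) > 0" using n1 by simp
  have "ln ((4::real)^n) \<le> ln ((2*real n+1) * (2*real n)^ppi(2*n))"
    using le pos by (subst ln_le_cancel_iff) auto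
  also have "\<dots> = ln (2 * real n + 1) + real (ppi (2*n)) * ln (2 * real n)"
    using n1 by (simp add: ln_mult ln_realpow distrib_left)
  finally have "real n * ln 4 \<le> ln (2 * real n + 1) + real (ppi (2*n)) * ln (2 * real n)"
    by (simp add: ln_realpow)
  moreover have "ln (2 * real n + 1) \<le> ln (real x + 1)" using n1 by simp
  moreover have "real (ppi (2*n)) * ln (2 * real n) \<le> real (ppi x) * ln (real x)"
    using n1 by (intro mult_mono) (auto intro: ppi_mono)
  moreover have "real n * ln (4::real) = 2 * real n * ln 2" using ln_realpow[of 2 2] by simp
  moreover have "(real x - 1) * ln 2 \<le> 2 * real n * ln 2" using n1 by (intro mult_right_mono) auto
  ultimately show ?thesis by linarith
qed


lemma ln2_ge: "ln (2::real) \<ge> 1/2"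
proof -
  have "1 + (-1/2) \<le> exp (-1/2::real)" by (rule exp_ge_add_one_self)
  then have "exp (1/2::real) \<le> 2" by (simp add: exp_minus field_simps)
  then have "ln (exp (1/2::real)) \<le> ln 2" by (subst ln_le_cancel_iff) auto
  then show ?thesis by simp
qed

lemma ln_le_2sqrt: "x > 0 \<Longrightarrow> ln x \<le> 2 * sqrt (x::real)"
proof -
  assume x: "x > 0"
  have "ln x = 2 * ln (sqrt x)" using x by (simp add: ln_sqrt)
  also have "\<dots> \<le> 2 * (sqrt x - 1)" using x by (intro mult_left_mono ln_le_minus_one) auto
  finally show ?thesis by simp
qed

lemma nth_prime_ln_bounds:
  "\<exists>M::nat. \<forall>m\<ge>M. ln (ln (real m)) - ln 12 \<le> ln (real (nth_prime m)) - ln (real m)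
      \<and> ln (real (nth_prime m)) - ln (real m) \<le> ln (ln (real m)) + ln 12"
proof -
  have ev: "eventually (\<lambda>x::real. (x-1)/2 - ln(x+1) \<ge> x/4) at_top" by real_asymp
  then obtain X0 :: real where X0: "\<And>x. x \<ge> X0 \<Longrightarrow> (x-1)/2 - ln(x+1) \<ge> x/4"
    by (auto simp: eventually_at_top_linorder)
  define M where "M = max (nat \<lceil>X0\<rceil>) 64"
  show ?thesis
  proof (intro exI[of _ M] allI impI)
    fix m :: nat assume mM: "m \<ge> M"
    define P where "P = nth_prime m"
    have m64: "m \<ge> 64" using mM unfolding M_def by simp
    have mX: "real m \<ge> X0" using mM unfolding M_def by linarith
    have Pprops: "prime P" "ppi P = m" using nth_prime_props[of m] m64 unfolding P_def by auto
    have Pm: "P > m" using nth_prime_gt[of m] m64 unfolding P_def by simp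
    have P2: "P \<ge> 2" using Pprops prime_ge_2_nat by auto
    have mpos: "real m > 0" using m64 by simp
    have lnm: "ln (real m) > 0" using m64 by simp
    have lnP: "ln (real P) \<ge> ln (real m)" using Pm mpos by simp
    have up: "real m * ln (real P) \<le> 6 * real P" using ppi_upper[OF P2] Pprops by simp
    have "real m * ln (real m) \<le> 6 * real P"
      using up lnP mpos by (meson mult_left_mono order.trans less_imp_le)
    then have "ln (real m) / 6 \<le> real P / real m" using mpos by (simp add: field_simps)
    then have "ln (ln (real m) / 6) \<le> ln (real P / real m)" using lnm mpos Pm by (subst ln_le_cancel_iff) auto
    then have low: "ln (ln (real m)) - ln 6 \<le> ln (real P) - ln (real m)"
      using lnm mpos Pm by (simp add: ln_div)
    have "ln (6::real) \<le> ln 12" by simp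
    note low' = order.trans[OF diff_left_mono[OF this] low]
    have lo: "real m * ln (real P) \<ge> (real P - 1) * ln 2 - ln (real P + 1)"
      using ppi_lower[OF P2] Pprops by simp
    have "(real P - 1) * ln 2 \<ge> (real P - 1) / 2" using ln2_ge P2 by (simp add: mult_left_mono[of "1/2" "ln 2" "real P - 1", simplified])
    moreover have "(real P-1)/2 - ln(real P+1) \<ge> real P/4" using X0[of "real P"] mX Pm by simp
    ultimately have key: "real P \<le> 4 * real m * ln (real P)" using lo by linarith
    have "ln (real P) \<le> 2 * sqrt (real P)" using P2 by (intro ln_le_2sqrt) simp
    then have "4 * real m * ln (real P) \<le> 4 * real m * (2 * sqrt (real P))"
      using mpos by (intro mult_left_mono) auto
    then have "real P \<le> 8 * real m * sqrt (real P)" using key by linarith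
    moreover have "real P = sqrt (real P) * sqrt (real P)" by simp
    moreover have "sqrt (real P) > 0" using P2 by simp
    ultimately have "sqrt (real P) \<le> 8 * real m" by (metis mult_le_cancel_right_pos mult.commute)
    then have "sqrt (real P) * sqrt (real P) \<le> (8 * real m) * (8 * real m)"
      by (intro mult_mono) auto
    then have P64: "real P \<le> 64 * real m ^ 2" by (simp add: power2_eq_square)
    have "ln (real P) \<le> ln (64 * real m ^ 2)" using P64 P2 mpos by (subst ln_le_cancel_iff) auto
    also have "\<dots> = ln 64 + 2 * ln (real m)" using mpos by (simp add: ln_mult ln_realpow)
    also have "\<dots> \<le> 3 * ln (real m)" using m64 by simp
    finally have lnP3: "ln (real P) \<le> 3 * ln (real m)" .
    have "4 * real m * ln (real P) \<le> 4 * real m * (3 * ln (real m))"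
      using mpos lnP3 by (intro mult_left_mono) auto
    then have "real P \<le> 12 * real m * ln (real m)" using key by linarith
    then have "real P / real m \<le> 12 * ln (real m)" using mpos by (simp add: field_simps)
    then have "ln (real P / real m) \<le> ln (12 * ln (real m))" using Pm mpos lnm
      by (subst ln_le_cancel_iff) auto
    then have high: "ln (real P) - ln (real m) \<le> ln (ln (real m)) + ln 12"
      using lnm mpos Pm by (simp add: ln_div ln_mult)
    show "ln (ln (real m)) - ln 12 \<le> ln (real (nth_prime m)) - ln (real m)
      \<and> ln (real (nth_prime m)) - ln (real m) \<le> ln (ln (real m)) + ln 12"
      using low' high unfolding P_def by simp
  qed
qed



lemma step_bounds:
  assumes "k \<ge> (1::nat)"
  shows "ln (real k) + 1 \<le> real (Suc k) * ln (real (Suc k)) - real k * ln (real k)"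
    and "real (Suc k) * ln (real (Suc k)) - real k * ln (real k) \<le> ln (real k) + 2"
proof -
  define D where "D = ln (real k + 1) - ln (real k)"
  have k0: "real k > 0" using assms by simp
  have eq: "real (Suc k) * ln (real (Suc k)) - real k * ln (real k) = ln (real k) + (real k + 1) * D"
    unfolding D_def by (simp add: algebra_simps)
  have "ln (real k / (real k + 1)) \<le> real k / (real k + 1) - 1"
    using k0 by (intro ln_le_minus_one) auto
  moreover have "ln (real k / (real k + 1)) = - D" unfolding D_def using k0 by (simp add: ln_div)
  moreover have "real k / (real k + 1) - 1 = - 1 / (real k + 1)" using k0 by (simp add: field_simps)
  ultimately have D1: "D \<ge> 1 / (real k + 1)" by simp
  have "ln ((real k + 1) / real k) \<le> (real k + 1) / real k - 1"
    using k0 by (intro ln_le_minus_one) auto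
  moreover have "ln ((real k + 1) / real k) = D" unfolding D_def using k0 by (simp add: ln_div)
  moreover have "(real k + 1) / real k - 1 = 1 / real k" using k0 by (simp add: field_simps)
  ultimately have D2: "D \<le> 1 / real k" by simp
  have "(real k + 1) * D \<ge> (real k + 1) * (1 / (real k + 1))" using D1 k0 by (intro mult_left_mono) auto
  then have "(real k + 1) * D \<ge> 1" using k0 by simp
  then show "ln (real k) + 1 \<le> real (Suc k) * ln (real (Suc k)) - real k * ln (real k)"
    using eq by linarith
  have "(real k + 1) * D \<le> (real k + 1) * (1 / real k)" using D2 k0 by (intro mult_left_mono) auto
  also have "\<dots> = 1 + 1 / real k" using k0 by (simp add: field_simps)
  also have "\<dots> \<le> 2" using assms by simp
  finally show "real (Suc k) * ln (real (Suc k)) - real k * ln (real k) \<le> ln (real k) + 2"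
    using eq by linarith
qed

lemma tele_upper:
  fixes L :: "nat \<Rightarrow> real"
  assumes d: "\<And>k. J \<le> k \<Longrightarrow> L (Suc k) - L k \<le> c * ln (real k)" and c: "c \<ge> 0" and J: "J \<ge> 1"
    and j: "J \<le> j"
  shows "L j \<le> L J + c * (real j * ln (real j) - real J * ln (real J))"
  using j
proof (induction j rule: dec_induct)
  case base then show ?case by simp
next
  case (step k)
  have k1: "k \<ge> 1" using step J by simp
  have "c * ln (real k) \<le> c * (real (Suc k) * ln (real (Suc k)) - real k * ln (real k))"
    using step_bounds(1)[OF k1] c by (intro mult_left_mono) auto
  then show ?case using step d[of k] by (simp add: algebra_simps)
qed

lemma tele_lower:
  fixes L :: "nat \<Rightarrow> real"
  assumes d: "\<And>k. J \<le> k \<Longrightarrow> L (Suc k) - L k \<ge> c * ln (real k)" and c: "c \<ge> 0" and J: "J \<ge> 1"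
    and j: "J \<le> j"
  shows "L j \<ge> L J + c * (real j * ln (real j) - real J * ln (real J)) - 2 * c * (real j - real J)"
  using j
proof (induction j rule: dec_induct)
  case base then show ?case by simp
next
  case (step k)
  have k1: "k \<ge> 1" using step J by simp
  have "c * (real (Suc k) * ln (real (Suc k)) - real k * ln (real k)) \<le> c * (ln (real k) + 2)"
    using step_bounds(2)[OF k1] c by (intro mult_left_mono) auto
  then show ?case using step d[of k] by (simp add: algebra_simps)
qed

lemma tele_const:
  fixes L :: "nat \<Rightarrow> real"
  assumes d: "\<And>k. J \<le> k \<Longrightarrow> L (Suc k) - L k \<ge> 1" and j: "J \<le> j"
  shows "L j \<ge> L J + (real j - real J)"
  using j
proof (induction j rule: dec_induct)
  case base then show ?case by simp
next
  case (step k)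
  then show ?case using d[of k] by simp
qed

lemma asym_from_diff:
  fixes L :: "nat \<Rightarrow> real"
  assumes ev: "\<And>e. e > 0 \<Longrightarrow> eventually (\<lambda>k. \<bar>L (Suc k) - L k - ln (real k)\<bar> \<le> e * ln (real k)) sequentially"
  shows "(\<lambda>j. L j / (real j * ln (real j))) \<longlonglongrightarrow> 1"
proof (rule tendstoI)
  have small: "eventually (\<lambda>j. dist (L j / (real j * ln (real j))) 1 < e) sequentially"
    if e: "e > 0" "e < 1" for e
  proof -
    define eps where "eps = e / 4"
    have eps: "eps > 0" "eps < 1" using e unfolding eps_def by auto
    obtain J0 where J0: "\<And>k. k \<ge> J0 \<Longrightarrow> \<bar>L (Suc k) - L k - ln (real k)\<bar> \<le> eps * ln (real k)"
      using ev[OF eps(1)] unfolding eventually_sequentially by blast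
    define J where "J = max J0 1"
    have J: "J \<ge> 1" "J \<ge> J0" unfolding J_def by auto
    have dU: "L (Suc k) - L k \<le> (1 + eps) * ln (real k)" if "J \<le> k" for k
    proof -
      have "\<bar>L (Suc k) - L k - ln (real k)\<bar> \<le> eps * ln (real k)" using J0 J that by simp
      then show ?thesis by (simp add: abs_le_iff algebra_simps)
    qed
    have dL: "L (Suc k) - L k \<ge> (1 - eps) * ln (real k)" if "J \<le> k" for k
    proof -
      have "\<bar>L (Suc k) - L k - ln (real k)\<bar> \<le> eps * ln (real k)" using J0 J that by simp
      then show ?thesis by (simp add: abs_le_iff algebra_simps)
    qed
    have c1: "1 + eps \<ge> 0" and c2: "1 - eps \<ge> 0" using eps by auto
    have up: "L j \<le> L J + (1 + eps) * (real j * ln (real j) - real J * ln (real J))" if "j \<ge> J" for j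
      by (rule tele_upper[OF dU c1 J(1) that])
    have lo: "L j \<ge> L J + (1 - eps) * (real j * ln (real j) - real J * ln (real J)) - 2 * (1 - eps) * (real j - real J)"
      if "j \<ge> J" for j
      by (rule tele_lower[OF dL c2 J(1) that])
    define C where "C = \<bar>L J\<bar> + 2 * real J * ln (real J) + 2 * real J"
    have ev1: "eventually (\<lambda>j. (C + (1 + eps) * (real j * ln (real j))) / (real j * ln (real j)) < 1 + e) sequentially"
      using e unfolding eps_def by real_asymp
    have ev2: "eventually (\<lambda>j. (- C + (1 - eps) * (real j * ln (real j)) - 2 * real j) / (real j * ln (real j)) > 1 - e) sequentially"
      using e unfolding eps_def by real_asymp
    have ev3: "eventually (\<lambda>j::nat. real j * ln (real j) > 0) sequentially" by real_asymp
    show ?thesis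
      using ev1 ev2 ev3 eventually_ge_at_top[of "max J 3"]
    proof eventually_elim
      case (elim j)
      have jJ: "j \<ge> J" using elim by simp
      have pos: "real j * ln (real j) > 0" using elim by simp
      have lnJ: "real J * ln (real J) \<ge> 0" using J by simp
      define X where "X = real j * ln (real j)"
      define Y where "Y = real J * ln (real J)"
      have CL: "C \<ge> \<bar>L J\<bar> + 2 * Y + 2 * real J" unfolding C_def Y_def by simp
      have "(1 + eps) * (X - Y) \<le> (1 + eps) * X" using eps lnJ unfolding Y_def by (intro mult_left_mono) auto
      then have "L j \<le> C + (1 + eps) * X"
        using up[OF jJ] CL lnJ unfolding X_def[symmetric] Y_def[symmetric] by linarith
      then have "L j / X \<le> (C + (1 + eps) * X) / X"
        using pos unfolding X_def by (intro divide_right_mono) auto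
      then have u: "L j / (real j * ln (real j)) < 1 + e"
        using elim(1) unfolding X_def by linarith
      have "(1 - eps) * Y \<le> Y" using eps lnJ unfolding Y_def
        by (simp add: mult_left_le_one_le)
      moreover have "(1 - eps) * (real j - real J) \<le> real j"
      proof -
        have "(1 - eps) * (real j - real J) \<le> 1 * (real j - real J)"
          using eps jJ by (intro mult_right_mono) auto
        then show ?thesis by simp
      qed
      moreover have "(1 - eps) * (X - Y) = (1 - eps) * X - (1 - eps) * Y" by (simp add: algebra_simps)
      ultimately have "L j \<ge> - C + (1 - eps) * X - 2 * real j"
        using lo[OF jJ] CL lnJ unfolding X_def[symmetric] Y_def[symmetric] by linarith
      then have "L j / X \<ge> (- C + (1 - eps) * X - 2 * real j) / X"
        using pos unfolding X_def by (intro divide_right_mono) auto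
      then have l: "L j / (real j * ln (real j)) > 1 - e"
        using elim(2) unfolding X_def by linarith
      show ?case using u l by (simp add: dist_real_def abs_less_iff)
    qed
  qed
  fix e :: real assume e: "e > 0"
  have "eventually (\<lambda>j. dist (L j / (real j * ln (real j))) 1 < min e (1/2)) sequentially"
    using e by (intro small) auto
  then show "eventually (\<lambda>j. dist (L j / (real j * ln (real j))) 1 < e) sequentially"
    by eventually_elim auto
qed



theorem corollary7:
  fixes n :: nat
  assumes "n \<ge> 1"
  shows "(\<lambda>j. ln (real (iter_prime j n))) \<sim>[at_top] (\<lambda>j. real j * ln (real j))"
proof -
  define a where "a j = iter_prime j n" for j
  define L where "L j = ln (real (a j))" for j
  have aSuc: "a (Suc j) = nth_prime (a j)" for j unfolding a_def by simp
  have a_ge: "a j \<ge> j + 1" for j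
  proof (induction j)
    case 0 then show ?case using assms unfolding a_def by simp
  next
    case (Suc j)
    have "nth_prime (a j) > a j" using Suc by (intro nth_prime_gt) simp
    then show ?case using Suc aSuc[of j] by simp
  qed
  obtain M where M: "\<And>m. m \<ge> M \<Longrightarrow> ln (ln (real m)) - ln 12 \<le> ln (real (nth_prime m)) - ln (real m)
      \<and> ln (real (nth_prime m)) - ln (real m) \<le> ln (ln (real m)) + ln 12"
    using nth_prime_ln_bounds by blast
  have dB: "ln (L j) - ln 12 \<le> L (Suc j) - L j \<and> L (Suc j) - L j \<le> ln (L j) + ln 12" if "j \<ge> M" for j
  proof -
    have "a j \<ge> M" using a_ge[of j] that by simp
    from M[OF this] show ?thesis unfolding L_def aSuc by simp
  qed
  have Lge: "L j \<ge> ln (real j + 1)" for j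
    unfolding L_def using a_ge[of j] by simp
  have Lpos: "L j > 0" if "j \<ge> 1" for j
  proof -
    have "ln (real j + 1) > 0" using that by simp
    then show ?thesis using Lge[of j] by linarith
  qed
  have ln12: "ln (12::real) \<le> 11" using ln_le_minus_one[of 12] by simp
  define J1 where "J1 = max (max M 1) (nat \<lceil>exp (12 * exp (1::real))\<rceil>)"
  have d1: "L (Suc k) - L k \<ge> 1" if "J1 \<le> k" for k
  proof -
    have kM: "k \<ge> M" "k \<ge> 1" using that unfolding J1_def by auto
    have "real k \<ge> exp (12 * exp 1)" using that unfolding J1_def by linarith
    then have "real k + 1 \<ge> exp (12 * exp 1)" by simp
    then have "ln (real k + 1) \<ge> 12 * exp 1"
      by (metis exp_gt_zero ln_exp ln_le_cancel_iff order_less_le_trans)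
    then have "L k \<ge> 12 * exp 1" using Lge[of k] by simp
    then have "ln (L k) \<ge> ln (12 * exp 1)" using Lpos[of k] kM(2) by (subst ln_le_cancel_iff) auto
    also have "ln (12 * exp 1) = ln 12 + (1::real)" by (simp add: ln_mult)
    finally show ?thesis using dB[OF kM(1)] by linarith
  qed
  have Llow: "L j \<ge> real j - real J1" if "j \<ge> J1" for j
  proof -
    have "L J1 > 0" using Lpos[of J1] unfolding J1_def by simp
    then show ?thesis using tele_const[where L=L and J=J1 and j=j, OF d1 that] by simp
  qed
  have evA: "eventually (\<lambda>x::real. x/2 \<ge> ln x + 11) at_top" by real_asymp
  then obtain A0 :: real where A0: "\<And>x. x \<ge> A0 \<Longrightarrow> x/2 \<ge> ln x + 11"
    by (auto simp: eventually_at_top_linorder)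
  define J2 where "J2 = max M 3"
  define A where "A = max (max A0 2) (L J2 / (real J2 * ln (real J2)))"
  have A2: "A \<ge> 2" unfolding A_def by simp
  have AA: "A/2 \<ge> ln A + 11" using A0[of A] unfolding A_def by simp
  have J2: "J2 \<ge> 3" "J2 \<ge> M" unfolding J2_def by auto
  have Lup: "L j \<le> A * (real j * ln (real j))" if "j \<ge> J2" for j
    using that
  proof (induction j rule: dec_induct)
    case base
    have pos: "real J2 * ln (real J2) > 0" using J2 by simp
    have "L J2 / (real J2 * ln (real J2)) \<le> A" unfolding A_def by simp
    then show ?case using pos by (simp add: divide_le_eq)
  next
    case (step k)
    have k: "k \<ge> 3" "k \<ge> M" using step J2 by auto
    have lnk: "ln (real k) > 0" using k by simp
    have lnk_le: "ln (real k) \<le> real k" using ln_le_minus_one[of "real k"] k by simp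
    have Lk: "L k > 0" using Lpos[of k] k by simp
    have "ln (L k) \<le> ln (A * (real k * ln (real k)))"
      using step.IH Lk by (subst ln_le_cancel_iff) (auto intro: order.strict_trans2)
    also have "\<dots> \<le> ln (A * (real k * real k))"
      using A2 k lnk lnk_le by (subst ln_le_cancel_iff) (auto intro!: mult_pos_pos mult_left_mono)
    also have "\<dots> = ln A + 2 * ln (real k)" using A2 k by (simp add: ln_mult)
    finally have lnLk: "ln (L k) \<le> ln A + 2 * ln (real k)" .
    have st: "A * (ln (real k) + 1) \<le> A * (real (Suc k) * ln (real (Suc k)) - real k * ln (real k))"
      using step_bounds(1)[of k] k A2 by (intro mult_left_mono) auto
    have "2 * ln (real k) \<le> A * ln (real k)" using A2 lnk by (intro mult_right_mono) auto
    then have "L (Suc k) \<le> A * (real k * ln (real k)) + A * ln (real k) + A"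
      using dB[OF k(2)] step.IH lnLk AA ln12 A2 by linarith
    also have "\<dots> \<le> A * (real (Suc k) * ln (real (Suc k)))"
      using st by (simp add: algebra_simps)
    finally show ?case .
  qed
  have ev: "eventually (\<lambda>k. \<bar>L (Suc k) - L k - ln (real k)\<bar> \<le> e * ln (real k)) sequentially"
    if e: "e > 0" for e
  proof -
    have e1: "eventually (\<lambda>k::nat. ln (real k) - (ln (real k - real J1) - ln 12) \<le> e * ln (real k)) sequentially"
      using e by real_asymp
    have e2: "eventually (\<lambda>k::nat. ln A + ln (ln (real k)) + ln 12 \<le> e * ln (real k)) sequentially"
      using e by real_asymp
    show ?thesis using e1 e2 eventually_ge_at_top[of "J1 + J2 + 1"]
    proof eventually_elim
      case (elim k)
      have k: "k \<ge> J1" "k \<ge> J2" "k > J1" "k \<ge> M" "k \<ge> 3" using elim J2 by auto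
      have lnk: "ln (real k) > 0" using k by simp
      have pos1: "real k - real J1 > 0" using k by simp
      have "ln (L k) \<ge> ln (real k - real J1)"
        using Llow[OF k(1)] pos1 by (subst ln_le_cancel_iff) auto
      then have lowd: "L (Suc k) - L k \<ge> ln (real k - real J1) - ln 12" using dB[OF k(4)] by linarith
      have Lk: "L k > 0" using Lpos[of k] k by simp
      have "ln (L k) \<le> ln (A * (real k * ln (real k)))"
        using Lup[OF k(2)] Lk by (subst ln_le_cancel_iff) (auto intro: order.strict_trans2)
      also have "\<dots> = ln A + ln (real k) + ln (ln (real k))" using A2 k lnk by (simp add: ln_mult)
      finally have upd: "L (Suc k) - L k \<le> ln A + ln (real k) + ln (ln (real k)) + ln 12"
        using dB[OF k(4)] by linarith
      show ?case using lowd upd elim(1) elim(2) by (simp add: abs_le_iff)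
    qed
  qed
  have lim: "(\<lambda>j. L j / (real j * ln (real j))) \<longlonglongrightarrow> 1"
    by (rule asym_from_diff[OF ev])
  have "(\<lambda>j. L j) \<sim>[at_top] (\<lambda>j. real j * ln (real j))"
    by (rule asymp_equivI'[OF lim])
  then show ?thesis unfolding L_def a_def .
qed


end
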